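(* Let $p\in\mathcal M_1^+$ and define $\pi_k=\sum_{\ell\ge k}\frac{1}{\ell+1}p_\ell$ for $k\in\mathbb N_0$. Then $\pi=(\pi_k)\in\mathcal M_1^+$, and $$\mathcal R_1(p)_i=\sum_{j=0}^i\pi_j\,\pi_{i-j}=(\pi*\pi)_i\quad\text{for all }i\in\mathbb N_0,$$ where $\mathcal R_1(p)_i=\sum_{k,\ell\ge0,\ k+\ell\ge i}\frac{1+\min\{k,\ell,i,k+\ell-i\}}{(k+1)(\ell+1)}p_kp_\ell$ and $*$ is convolution in $\ell^1(\mathbb N_0)$.
   Context: $\mathcal M_1^+$ is the set of probability measures on $\mathbb N_0$, identified with nonnegative sequences summing to $1$. *)

theory Defs
  imports "HOL-Analysis.Analysis"
begin

definition M1plus :: "(nat \<Rightarrow> real) set" where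
  "M1plus = {p. (\<forall>k. 0 \<le> p k) \<and> p sums 1}"

definition R1 :: "(nat \<Rightarrow> real) \<Rightarrow> nat \<Rightarrow> real" where
  "R1 p i = (\<Sum>\<^sub>\<infinity>(k,l)\<in>{(k,l). k + l \<ge> i}.
      (1 + real (min (min k l) (min i (k + l - i)))) / (real (k+1) * real (l+1)) * p k * p l)"

definition conv :: "(nat \<Rightarrow> real) \<Rightarrow> (nat \<Rightarrow> real) \<Rightarrow> nat \<Rightarrow> real" where
  "conv a b i = (\<Sum>j=0..i. a j * b (i - j))"

end

theory Submission
  imports Defs
begin

lemma infsum_finite_sum_swap:
  fixes f :: "'i \<Rightarrow> 'a \<Rightarrow> real"
  assumes "finite S" "\<And>j. j \<in> S \<Longrightarrow> f j summable_on A"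
  shows "(\<lambda>x. \<Sum>j\<in>S. f j x) summable_on A \<and> infsum (\<lambda>x. \<Sum>j\<in>S. f j x) A = (\<Sum>j\<in>S. infsum (f j) A)"
  using assms
proof (induction S rule: finite_induct)
  case empty
  then show ?case by simp
next
  case (insert a S)
  then have IH: "(\<lambda>x. \<Sum>j\<in>S. f j x) summable_on A"
     "infsum (\<lambda>x. \<Sum>j\<in>S. f j x) A = (\<Sum>j\<in>S. infsum (f j) A)" by auto
  have fa: "f a summable_on A" using insert by auto
  show ?case using insert(1,2) IH fa
    by (simp add: summable_on_add infsum_add)
qed

lemma count_lemma:
  fixes i k l :: nat
  shows "card {j \<in> {0..i}. j \<le> k \<and> i - j \<le> l} =
    (if i \<le> k + l then 1 + min (min k l) (min i (k + l - i)) else 0)"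
proof -
  have "{j \<in> {0..i}. j \<le> k \<and> i - j \<le> l} = {i - l .. min i k}" by auto
  then have *: "card {j \<in> {0..i}. j \<le> k \<and> i - j \<le> l} = Suc (min i k) - (i - l)" by simp
  show ?thesis unfolding * by (auto simp: min_def split: if_splits)
qed

lemma pi_prob:
  fixes p g :: "nat \<Rightarrow> real"
  assumes p0: "\<And>k. 0 \<le> p k" and ps: "p sums 1"
    and gdef: "\<And>l. g l = p l / real (l + 1)"
  shows "(\<lambda>k. \<Sum>\<^sub>\<infinity>l\<in>{k..}. g l) sums 1"
proof -
  define F where "F = (\<lambda>(l::nat,k::nat). if k \<le> l then g l else 0)"
  have g0: "\<And>l. 0 \<le> g l" using p0 gdef by simp
  have gp: "g l \<le> p l" for l
  proof -
    have "p l / real (l+1) \<le> p l / 1" using p0[of l] by (intro divide_left_mono) auto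
    then show ?thesis using gdef by simp
  qed
  have inner: "((\<lambda>k. F (l,k)) has_sum p l) UNIV" for l
  proof -
    have "((\<lambda>k. F (l,k)) has_sum (\<Sum>k\<in>{..l}. F (l,k))) {..l}" by (rule has_sum_finite) simp
    moreover have "(\<Sum>k\<in>{..l}. F (l,k)) = p l" using gdef by (simp add: F_def)
    ultimately show ?thesis
      by (subst has_sum_cong_neutral[where T="{..l}" and g="\<lambda>k. F (l,k)"]) (auto simp: F_def)
  qed
  have phs: "(p has_sum 1) UNIV" by (rule sums_nonneg_imp_has_sum[OF ps p0])
  have summ: "F summable_on Sigma UNIV (\<lambda>_. UNIV)"
    by (rule summable_on_SigmaI[OF inner]) (use phs g0 in \<open>auto simp: F_def summable_on_def\<close>)
  have "(F has_sum 1) (Sigma UNIV (\<lambda>_. UNIV))"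
    by (rule has_sum_SigmaI[OF inner phs summ])
  then have A: "((\<lambda>(x,y). F (y,x)) has_sum 1) (UNIV \<times> UNIV)"
    using has_sum_swap by blast
  have B: "((\<lambda>l. F (l,k)) has_sum (\<Sum>\<^sub>\<infinity>l\<in>{k..}. g l)) UNIV" for k
  proof -
    have "g summable_on UNIV"
      by (rule summable_on_comparison_test[OF has_sum_imp_summable[OF phs]]) (use g0 gp in auto)
    then have "g summable_on {k..}" by (rule summable_on_subset) auto
    then have "(g has_sum (\<Sum>\<^sub>\<infinity>l\<in>{k..}. g l)) {k..}" by simp
    then show ?thesis
      by (subst has_sum_cong_neutral[where T="{k..}" and g=g]) (auto simp: F_def)
  qed
  have "((\<lambda>k. \<Sum>\<^sub>\<infinity>l\<in>{k..}. g l) has_sum 1) UNIV"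
    by (rule has_sum_SigmaD[OF A]) (use B in simp)
  then show ?thesis by (rule has_sum_imp_sums)
qed


theorem proposition9:
  fixes p :: "nat \<Rightarrow> real" and \<pi> :: "nat \<Rightarrow> real"
  assumes "p \<in> M1plus"
    and "\<And>k. \<pi> k = (\<Sum>\<^sub>\<infinity>l\<in>{k..}. p l / real (l + 1))"
  shows "\<pi> \<in> M1plus \<and> (\<forall>i. R1 p i = conv \<pi> \<pi> i)"
proof -
  have p0: "\<And>k. 0 \<le> p k" and ps: "p sums 1" using assms(1) by (auto simp: M1plus_def)
  define g where "g l = p l / real (l+1)" for l
  have g0: "\<And>l. 0 \<le> g l" using p0 g_def by simp
  have gp: "g l \<le> p l" for l
  proof -
    have "p l / real (l+1) \<le> p l / 1" using p0[of l] by (intro divide_left_mono) auto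
    then show ?thesis using g_def by simp
  qed
  have phs: "(p has_sum 1) UNIV" by (rule sums_nonneg_imp_has_sum[OF ps p0])
  have gs: "g summable_on UNIV"
    by (rule summable_on_comparison_test[OF has_sum_imp_summable[OF phs]]) (use g0 gp in auto)
  have gsk: "g summable_on {k..}" for k by (rule summable_on_subset[OF gs]) auto
  have geq: "g = (\<lambda>l. p l / real (l+1))" by (rule ext) (simp add: g_def)
  have pi: "\<pi> k = infsum g {k..}" for k using assms(2)[of k] by (simp only: geq)
  have piM: "\<pi> \<in> M1plus"
  proof -
    have "\<pi> = (\<lambda>k. infsum g {k..})" using pi by (rule ext)
    moreover have "0 \<le> infsum g {k..}" for k by (rule infsum_nonneg) (use g0 in auto)
    ultimately show ?thesis unfolding M1plus_def using pi_prob[OF p0 ps g_def] by auto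
  qed
  define G where "G = infsum g UNIV"
  have hs: "(\<lambda>(k,l). g k * g l) summable_on Sigma UNIV (\<lambda>_. UNIV)"
  proof (rule summable_on_SigmaI)
    show "((\<lambda>l. case (k, l) of (k, l) \<Rightarrow> g k * g l) has_sum g k * G) UNIV" for k
      using has_sum_cmult_right[OF has_sum_infsum[OF gs], of "g k"] by (simp add: G_def)
    show "(\<lambda>k. g k * G) summable_on UNIV" by (rule summable_on_cmult_left[OF gs])
  qed (use g0 in auto)
  have hsub: "(\<lambda>(k,l). g k * g l) summable_on ({j..} \<times> {m..})" for j m
    by (rule summable_on_subset[OF hs]) auto
  have prod: "\<pi> j * \<pi> m = infsum (\<lambda>(k,l). g k * g l) ({j..} \<times> {m..})" for j m
  proof -
    have "infsum (\<lambda>k. infsum (\<lambda>l. g k * g l) {m..}) {j..} = infsum (\<lambda>(k,l). g k * g l) ({j..} \<times> {m..})"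
      by (rule infsum_Sigma'_banach[OF hsub])
    moreover have "infsum (\<lambda>l. g k * g l) {m..} = g k * \<pi> m" for k
      by (simp add: pi infsum_cmult_right[OF gsk])
    moreover have "infsum (\<lambda>k. g k * \<pi> m) {j..} = \<pi> j * \<pi> m"
      by (simp add: pi infsum_cmult_left[OF gsk])
    ultimately show ?thesis by simp
  qed
  define h where "h = (\<lambda>(k::nat,l::nat). g k * g l)"
  define A where "A = (\<lambda>j. {j..} \<times> {i - j..})"
  have "R1 p i = conv \<pi> \<pi> i" for i
  proof -
    define A where "A = (\<lambda>j. ({j..} \<times> {i - j..}) :: (nat \<times> nat) set)"
    define F where "F = (\<lambda>j x. if x \<in> A j then h x else 0)"
    have Fs: "F j summable_on UNIV" for j
    proof -
      have "h summable_on A j" unfolding h_def A_def by (rule hsub)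
      then show ?thesis unfolding F_def
        by (subst summable_on_cong_neutral[where T="A j" and g=h]) auto
    qed
    have FA: "infsum (F j) UNIV = \<pi> j * \<pi> (i - j)" for j
    proof -
      have "infsum (F j) UNIV = infsum h (A j)" unfolding F_def
        by (rule infsum_cong_neutral) auto
      then show ?thesis using prod[of j "i - j"] by (simp add: h_def A_def)
    qed
    have "conv \<pi> \<pi> i = (\<Sum>j=0..i. infsum (F j) UNIV)" unfolding conv_def using FA by simp
    also have "\<dots> = infsum (\<lambda>x. \<Sum>j=0..i. F j x) UNIV"
      using infsum_finite_sum_swap[of "{0..i}" F UNIV] Fs by simp
    also have "\<dots> = infsum (\<lambda>(k,l). if (k,l) \<in> {(k,l). k + l \<ge> i} then
       (1 + real (min (min k l) (min i (k + l - i)))) / (real (k+1) * real (l+1)) * p k * p l else 0) UNIV"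
    proof (rule infsum_cong)
      fix x :: "nat \<times> nat"
      obtain k l where x: "x = (k,l)" by fastforce
      have "(\<Sum>j=0..i. F j x) = (\<Sum>j\<in>{j \<in> {0..i}. j \<le> k \<and> i - j \<le> l}. h x)"
        unfolding x by (subst sum.inter_filter) (simp_all add: F_def A_def)
      also have "\<dots> = real (card {j \<in> {0..i}. j \<le> k \<and> i - j \<le> l}) * h x" by simp
      also have "\<dots> = (case x of (k,l) \<Rightarrow> if (k,l) \<in> {(k,l). k + l \<ge> i} then
       (1 + real (min (min k l) (min i (k + l - i)))) / (real (k+1) * real (l+1)) * p k * p l else 0)"
        unfolding count_lemma by (simp add: x h_def g_def)
      finally show "(\<Sum>j=0..i. F j x) = (case x of (k,l) \<Rightarrow> if (k,l) \<in> {(k,l). k + l \<ge> i} then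
       (1 + real (min (min k l) (min i (k + l - i)))) / (real (k+1) * real (l+1)) * p k * p l else 0)" .
    qed
    also have "\<dots> = R1 p i" unfolding R1_def
      by (rule infsum_cong_neutral) auto
    finally show ?thesis by simp
  qed
  then show ?thesis using piM by simp
qed

end
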